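(* Let $(X,d)$ be a finite metric space, $X=\{1,\dots,n\}$, and let $\alpha$ be an action of a compact quantum group $\mathcal{Q}$ on $C(X)$, written $\alpha(\delta_i)=\sum_{j}\delta_j\otimes q_{ij}$. The following are equivalent: (i) $\sum_{i\in X}d_{il}\,q_{ki}=\sum_{i\in X}d_{ki}\,q_{il}$ for all $k,l\in X$ (Banica's condition); (ii) $\alpha^{(2)}(d)=d\otimes1$, where $d=\sum_{i,j}d_{ij}\,\delta_i\otimes\delta_j\in C(X\times X)$; (iii) $\alpha^{(2)}(c)=c\otimes1$, where $c=\sum_{i\ne j}d_{ij}^{-2}\,\delta_i\otimes\delta_j$; (iv) $(\mathcal{L}\otimes\mathrm{id})\circ\alpha=\alpha\circ\mathcal{L}$, where $\mathcal{L}$ is the Laplacian of the spectral triple $(C(X),\mathsf{H},D)$.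
   Context: $d_{ij}=d(i,j)$ and $\delta_i$ is the indicator of $i$. $\alpha^{(2)}:C(X)\otimes C(X)\to C(X)\otimes C(X)\otimes\mathcal{Q}$ is defined by $\alpha^{(2)}(f\otimes g)=\sum_{k,l}f_k\otimes g_l\otimes x_ky_l$ when $\alpha(f)=\sum_kf_k\otimes x_k$, $\alpha(g)=\sum_lg_l\otimes y_l$ (extended linearly). Spectral triple: $Y=\{(x,y)\in X\times X:x\neq y\}$, $s(x,y)=x$, $t(x,y)=y$; $\mathsf{H}=\mathbb{C}^2\otimes\ell^2(Y)$, $D=\begin{pmatrix}0&i\\-i&0\end{pmatrix}\otimes M_{d^{-1}}$, $\pi(f)=\begin{pmatrix}1&0\\0&0\end{pmatrix}\otimes M_{f\circ s}+\begin{pmatrix}0&0\\0&1\end{pmatrix}\otimes M_{f\circ t}$. Laplacian: $\mathsf{H}_0=C(X)$ with inner product $\mathrm{Tr}(\pi(f)^*\pi(g))$, $d_D(f)=[D,\pi(f)]$ into Hilbert–Schmidt operators on $\mathsf{H}$, $\mathcal{L}=-d_D^*d_D$; explicitly $\mathcal{L}(f)(i)=\kappa\sum_{j\ne i}d_{ij}^{-2}(f(j)-f(i))$ for a positive constant $\kappa$ depending only on $n$. *)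

theory Defs
  imports Main "HOL.Real_Vector_Spaces"
begin

definition finite_metric :: "('x::finite \<Rightarrow> 'x \<Rightarrow> real) \<Rightarrow> bool" where
  "finite_metric d \<longleftrightarrow>
     (\<forall>i. d i i = 0) \<and> (\<forall>i j. i \<noteq> j \<longrightarrow> d i j > 0) \<and>
     (\<forall>i j. d i j = d j i) \<and> (\<forall>i j k. d i k \<le> d i j + d j k)"

text \<open>Coefficient matrix of an action of a compact quantum group on C(X):
  alpha(delta_i) = sum_j delta_j (x) q i j.  By Wang's theorem this is exactly a
  magic unitary (projections, orthogonal along rows and columns, row and column
  sums equal to 1); Q is modelled as a unital real algebra.\<close>
definition magic_unitary :: "('x::finite \<Rightarrow> 'x \<Rightarrow> 'q::real_algebra_1) \<Rightarrow> bool" where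
  "magic_unitary q \<longleftrightarrow>
     (\<forall>i j. q i j * q i j = q i j) \<and>
     (\<forall>i j k. j \<noteq> k \<longrightarrow> q i j * q i k = 0) \<and>
     (\<forall>i j k. i \<noteq> k \<longrightarrow> q i j * q k j = 0) \<and>
     (\<forall>i. (\<Sum>j\<in>UNIV. q i j) = 1) \<and>
     (\<forall>j. (\<Sum>i\<in>UNIV. q i j) = 1)"

text \<open>The action alpha : C(X) -> C(X) (x) Q, with C(X) (x) Q identified with X -> Q:
  alpha f = sum_i f(i) sum_j delta_j (x) q i j.\<close>
definition act :: "('x::finite \<Rightarrow> 'x \<Rightarrow> 'q::real_algebra_1) \<Rightarrow> ('x \<Rightarrow> real) \<Rightarrow> ('x \<Rightarrow> 'q)" where
  "act q f = (\<lambda>j. \<Sum>i\<in>UNIV. f i *\<^sub>R q i j)"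

text \<open>alpha^(2) : C(X) (x) C(X) -> C(X) (x) C(X) (x) Q, with C(X x X) (x) Q identified
  with X x X -> Q: alpha2(delta_i (x) delta_j) = sum_{k,l} delta_k (x) delta_l (x) q i k * q j l.\<close>
definition act2 :: "('x::finite \<Rightarrow> 'x \<Rightarrow> 'q::real_algebra_1) \<Rightarrow> ('x \<times> 'x \<Rightarrow> real) \<Rightarrow> ('x \<times> 'x \<Rightarrow> 'q)" where
  "act2 q F = (\<lambda>(k, l). \<Sum>i\<in>UNIV. \<Sum>j\<in>UNIV. F (i, j) *\<^sub>R (q i k * q j l))"

definition banica_cond :: "('x::finite \<Rightarrow> 'x \<Rightarrow> real) \<Rightarrow> ('x \<Rightarrow> 'x \<Rightarrow> 'q::real_algebra_1) \<Rightarrow> bool" where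
  "banica_cond d q \<longleftrightarrow>
     (\<forall>k l. (\<Sum>i\<in>UNIV. d i l *\<^sub>R q k i) = (\<Sum>i\<in>UNIV. d k i *\<^sub>R q i l))"

definition dist_fun :: "('x \<Rightarrow> 'x \<Rightarrow> real) \<Rightarrow> ('x \<times> 'x \<Rightarrow> real)" where
  "dist_fun d = (\<lambda>(i, j). d i j)"

definition cfun :: "('x \<Rightarrow> 'x \<Rightarrow> real) \<Rightarrow> ('x \<times> 'x \<Rightarrow> real)" where
  "cfun d = (\<lambda>(i, j). if i \<noteq> j then 1 / (d i j)\<^sup>2 else 0)"

definition tens_one :: "('x \<times> 'x \<Rightarrow> real) \<Rightarrow> ('x \<times> 'x \<Rightarrow> 'q::real_algebra_1)" where
  "tens_one F = (\<lambda>p. of_real (F p))"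

text \<open>Laplacian of the spectral triple, explicitly
  L(f)(i) = kappa * sum_{j ~= i} d_ij^{-2} (f j - f i), and L (x) id on C(X) (x) Q = X -> Q.\<close>
definition laplacian :: "real \<Rightarrow> ('x::finite \<Rightarrow> 'x \<Rightarrow> real) \<Rightarrow> ('x \<Rightarrow> real) \<Rightarrow> ('x \<Rightarrow> real)" where
  "laplacian \<kappa> d f = (\<lambda>i. \<kappa> * (\<Sum>j\<in>UNIV - {i}. (1 / (d i j)\<^sup>2) * (f j - f i)))"

definition laplacian_id :: "real \<Rightarrow> ('x::finite \<Rightarrow> 'x \<Rightarrow> real) \<Rightarrow> ('x \<Rightarrow> 'q::real_algebra_1) \<Rightarrow> ('x \<Rightarrow> 'q)" where
  "laplacian_id \<kappa> d F = (\<lambda>i. \<kappa> *\<^sub>R (\<Sum>j\<in>UNIV - {i}. (1 / (d i j)\<^sup>2) *\<^sub>R (F j - F i)))"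

end

theory Submission
  imports Defs
begin

definition pcond :: "('x::finite \<Rightarrow> 'x \<Rightarrow> real) \<Rightarrow> ('x \<Rightarrow> 'x \<Rightarrow> 'q::real_algebra_1) \<Rightarrow> bool" where
  "pcond M q \<longleftrightarrow> (\<forall>a b k l. M a b \<noteq> M k l \<longrightarrow> q a k * q b l = 0)"

lemma mu_col: "magic_unitary q \<Longrightarrow> q a k * q i k = (if i = a then q a k else 0)"
  unfolding magic_unitary_def by auto

lemma mu_row: "magic_unitary q \<Longrightarrow> q a k * q a i = (if i = k then q a k else 0)"
  unfolding magic_unitary_def by auto

lemma mu_rowsum: "magic_unitary q \<Longrightarrow> (\<Sum>j\<in>UNIV. q i j) = 1"
  unfolding magic_unitary_def by auto

lemma mu_colsum: "magic_unitary q \<Longrightarrow> (\<Sum>i\<in>UNIV. q i j) = 1"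
  unfolding magic_unitary_def by auto

lemma sum_if_eq1:
  fixes x :: "'q::real_algebra_1"
  shows "(\<Sum>j\<in>(UNIV::'x::finite set). f j *\<^sub>R (x * (if b = j then y j else 0))) = f b *\<^sub>R (x * y b)"
proof -
  have "\<And>j. f j *\<^sub>R (x * (if b = j then y j else 0)) = (if b = j then f j *\<^sub>R (x * y j) else 0)" by simp
  thus ?thesis by simp
qed

lemma act2_iff:
  fixes M :: "'x::finite \<Rightarrow> 'x \<Rightarrow> real" and q :: "'x \<Rightarrow> 'x \<Rightarrow> 'q::real_algebra_1"
  assumes mu: "magic_unitary q"
  shows "act2 q (\<lambda>(i,j). M i j) = tens_one (\<lambda>(i,j). M i j) \<longleftrightarrow> pcond M q"
proof
  assume eq: "act2 q (\<lambda>(i,j). M i j) = tens_one (\<lambda>(i,j). M i j)"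
  show "pcond M q" unfolding pcond_def
  proof (intro allI impI)
    fix a b k l assume ne: "M a b \<noteq> M k l"
    have e: "(\<Sum>i\<in>UNIV. \<Sum>j\<in>UNIV. M i j *\<^sub>R (q i k * q j l)) = of_real (M k l)"
      using fun_cong[OF eq, of "(k,l)"] unfolding act2_def tens_one_def by simp
    have "q a k * (\<Sum>i\<in>UNIV. \<Sum>j\<in>UNIV. M i j *\<^sub>R (q i k * q j l)) * q b l
        = (\<Sum>i\<in>UNIV. \<Sum>j\<in>UNIV. M i j *\<^sub>R ((q a k * q i k) * (q j l * q b l)))"
      by (simp add: sum_distrib_left sum_distrib_right mult.assoc)
    also have "\<dots> = (\<Sum>i\<in>UNIV. \<Sum>j\<in>UNIV. M i j *\<^sub>R ((if i = a then q a k else 0) * (if b = j then q j l else 0)))"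
      by (simp add: mu_col[OF mu])
    also have "\<dots> = (\<Sum>i\<in>UNIV. if i = a then (\<Sum>j\<in>UNIV. if j = b then M a b *\<^sub>R (q a k * q b l) else 0) else 0)"
      by (intro sum.cong refl) (simp add: sum_if_eq1)
    also have "\<dots> = M a b *\<^sub>R (q a k * q b l)"
      by simp
    finally have l: "q a k * (\<Sum>i\<in>UNIV. \<Sum>j\<in>UNIV. M i j *\<^sub>R (q i k * q j l)) * q b l = M a b *\<^sub>R (q a k * q b l)" .
    have r: "q a k * of_real (M k l) * q b l = M k l *\<^sub>R (q a k * q b l)"
      by (simp add: of_real_def)
    have "M a b *\<^sub>R (q a k * q b l) = M k l *\<^sub>R (q a k * q b l)" by (metis l e r)
    hence "(M a b - M k l) *\<^sub>R (q a k * q b l) = 0" by (simp add: scaleR_diff_left)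
    with ne show "q a k * q b l = 0" by simp
  qed
next
  assume pc: "pcond M q"
  show "act2 q (\<lambda>(i,j). M i j) = tens_one (\<lambda>(i,j). M i j)"
  proof (rule ext, clarify)
    fix k l
    have "(\<Sum>i\<in>UNIV. \<Sum>j\<in>UNIV. M i j *\<^sub>R (q i k * q j l)) = (\<Sum>i\<in>UNIV. \<Sum>j\<in>UNIV. M k l *\<^sub>R (q i k * q j l))"
      by (intro sum.cong refl) (metis pc pcond_def scaleR_zero_right)
    also have "\<dots> = M k l *\<^sub>R (\<Sum>i\<in>UNIV. q i k * (\<Sum>j\<in>UNIV. q j l))"
      by (simp add: scaleR_sum_right sum_distrib_left)
    also have "\<dots> = of_real (M k l)" by (simp add: mu_colsum[OF mu] of_real_def)
    finally show "act2 q (\<lambda>(i,j). M i j) (k,l) = tens_one (\<lambda>(i,j). M i j) (k,l)"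
      unfolding act2_def tens_one_def by simp
  qed
qed

lemma sum_if_eq2:
  fixes x :: "'q::real_algebra_1"
  shows "(\<Sum>i\<in>(UNIV::'x::finite set). f i *\<^sub>R ((if i = k then x else 0) * y)) = f k *\<^sub>R (x * y)"
proof -
  have "\<And>i. f i *\<^sub>R ((if i = k then x else 0) * y) = (if i = k then f k *\<^sub>R (x * y) else 0)" by simp
  thus ?thesis by simp
qed

lemma banica_iff:
  fixes M :: "'x::finite \<Rightarrow> 'x \<Rightarrow> real" and q :: "'x \<Rightarrow> 'x \<Rightarrow> 'q::real_algebra_1"
  assumes mu: "magic_unitary q"
  shows "(\<forall>k l. (\<Sum>i\<in>UNIV. M i l *\<^sub>R q k i) = (\<Sum>i\<in>UNIV. M k i *\<^sub>R q i l)) \<longleftrightarrow> pcond M q"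
proof
  assume B: "\<forall>k l. (\<Sum>i\<in>UNIV. M i l *\<^sub>R q k i) = (\<Sum>i\<in>UNIV. M k i *\<^sub>R q i l)"
  show "pcond M q" unfolding pcond_def
  proof (intro allI impI)
    fix a b k l assume ne: "M a b \<noteq> M k l"
    have e: "(\<Sum>i\<in>UNIV. M i l *\<^sub>R q a i) = (\<Sum>i\<in>UNIV. M a i *\<^sub>R q i l)" using B by blast
    have "q a k * (\<Sum>i\<in>UNIV. M i l *\<^sub>R q a i) * q b l = (\<Sum>i\<in>UNIV. M i l *\<^sub>R ((q a k * q a i) * q b l))"
      by (simp add: sum_distrib_left sum_distrib_right)
    also have "\<dots> = (\<Sum>i\<in>UNIV. M i l *\<^sub>R ((if i = k then q a k else 0) * q b l))"
      by (simp only: mu_row[OF mu])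
    also have "\<dots> = M k l *\<^sub>R (q a k * q b l)" by (rule sum_if_eq2)
    finally have l1: "q a k * (\<Sum>i\<in>UNIV. M i l *\<^sub>R q a i) * q b l = M k l *\<^sub>R (q a k * q b l)" .
    have "q a k * (\<Sum>i\<in>UNIV. M a i *\<^sub>R q i l) * q b l = (\<Sum>i\<in>UNIV. M a i *\<^sub>R (q a k * (q i l * q b l)))"
      by (simp add: sum_distrib_left sum_distrib_right mult.assoc)
    also have "\<dots> = (\<Sum>i\<in>UNIV. M a i *\<^sub>R (q a k * (if b = i then q i l else 0)))"
      by (simp only: mu_col[OF mu])
    also have "\<dots> = M a b *\<^sub>R (q a k * q b l)" by (rule sum_if_eq1)
    finally have l2: "q a k * (\<Sum>i\<in>UNIV. M a i *\<^sub>R q i l) * q b l = M a b *\<^sub>R (q a k * q b l)" .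
    have "M a b *\<^sub>R (q a k * q b l) = M k l *\<^sub>R (q a k * q b l)" by (metis l1 l2 e)
    hence "(M a b - M k l) *\<^sub>R (q a k * q b l) = 0" by (simp add: scaleR_diff_left)
    with ne show "q a k * q b l = 0" by simp
  qed
next
  assume pc: "pcond M q"
  show "\<forall>k l. (\<Sum>i\<in>UNIV. M i l *\<^sub>R q k i) = (\<Sum>i\<in>UNIV. M k i *\<^sub>R q i l)"
  proof (intro allI)
    fix k l
    have "(\<Sum>i\<in>UNIV. M i l *\<^sub>R q k i) = (\<Sum>i\<in>UNIV. M i l *\<^sub>R (q k i * (\<Sum>j\<in>UNIV. q j l)))"
      by (simp add: mu_colsum[OF mu])
    also have "\<dots> = (\<Sum>i\<in>UNIV. \<Sum>j\<in>UNIV. M i l *\<^sub>R (q k i * q j l))"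
      by (simp add: sum_distrib_left scaleR_sum_right)
    also have "\<dots> = (\<Sum>i\<in>UNIV. \<Sum>j\<in>UNIV. M k j *\<^sub>R (q k i * q j l))"
      by (intro sum.cong refl) (metis pc pcond_def scaleR_zero_right)
    also have "\<dots> = (\<Sum>j\<in>UNIV. \<Sum>i\<in>UNIV. M k j *\<^sub>R (q k i * q j l))"
      by (rule sum.swap)
    also have "\<dots> = (\<Sum>j\<in>UNIV. M k j *\<^sub>R ((\<Sum>i\<in>UNIV. q k i) * q j l))"
      by (simp add: sum_distrib_right scaleR_sum_right)
    also have "\<dots> = (\<Sum>i\<in>UNIV. M k i *\<^sub>R q i l)"
      by (simp add: mu_rowsum[OF mu])
    finally show "(\<Sum>i\<in>UNIV. M i l *\<^sub>R q k i) = (\<Sum>i\<in>UNIV. M k i *\<^sub>R q i l)" .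
  qed
qed

definition cmat :: "('x \<Rightarrow> 'x \<Rightarrow> real) \<Rightarrow> 'x \<Rightarrow> 'x \<Rightarrow> real" where
  "cmat d i j = (if i \<noteq> j then 1 / (d i j)\<^sup>2 else 0)"

lemma cfun_cmat: "cfun d = (\<lambda>(i,j). cmat d i j)"
  by (simp add: cfun_def cmat_def)

lemma cmat_eq_iff:
  assumes fm: "finite_metric d"
  shows "cmat d a b = cmat d k l \<longleftrightarrow> d a b = d k l"
proof -
  have pos: "\<And>i j. i \<noteq> j \<Longrightarrow> d i j > 0" and z: "\<And>i. d i i = 0"
    using fm unfolding finite_metric_def by auto
  show ?thesis
  proof (cases "a = b"; cases "k = l")
    assume "a \<noteq> b" "k \<noteq> l"
    hence p1: "d a b > 0" and p2: "d k l > 0" using pos by auto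
    have "1 / (d a b)\<^sup>2 = 1 / (d k l)\<^sup>2 \<longleftrightarrow> (d a b)\<^sup>2 = (d k l)\<^sup>2"
      using p1 p2 by (simp add: divide_inverse)
    also have "\<dots> \<longleftrightarrow> d a b = d k l" using p1 p2 by (simp add: power2_eq_iff_nonneg)
    finally show ?thesis using \<open>a \<noteq> b\<close> \<open>k \<noteq> l\<close> by (simp add: cmat_def)
  next
    assume "a = b" "k \<noteq> l"
    thus ?thesis using pos[of k l] z by (auto simp: cmat_def)
  next
    assume "a \<noteq> b" "k = l"
    thus ?thesis using pos[of a b] z by (auto simp: cmat_def)
  next
    assume "a = b" "k = l"
    thus ?thesis using z by (auto simp: cmat_def)
  qed
qed

lemma pcond_cmat:
  assumes "finite_metric d"
  shows "pcond (cmat d) q \<longleftrightarrow> pcond d q"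
  unfolding pcond_def using cmat_eq_iff[OF assms] by simp

lemma lapid_eq: "laplacian_id \<kappa> d F i = \<kappa> *\<^sub>R (\<Sum>j\<in>UNIV. cmat d i j *\<^sub>R (F j - F i))"
proof -
  have "(\<Sum>j\<in>UNIV. cmat d i j *\<^sub>R (F j - F i)) = (\<Sum>j\<in>UNIV - {i}. (1 / (d i j)\<^sup>2) *\<^sub>R (F j - F i))"
    by (rule sum.mono_neutral_cong_right) (auto simp: cmat_def)
  thus ?thesis by (simp add: laplacian_id_def)
qed

lemma lap_eq: "laplacian \<kappa> d f i = \<kappa> * (\<Sum>j\<in>UNIV. cmat d i j * (f j - f i))"
proof -
  have "(\<Sum>j\<in>UNIV. cmat d i j * (f j - f i)) = (\<Sum>j\<in>UNIV - {i}. (1 / (d i j)\<^sup>2) * (f j - f i))"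
    by (rule sum.mono_neutral_cong_right) (auto simp: cmat_def)
  thus ?thesis by (simp add: laplacian_def)
qed

lemma lhs_eq:
  fixes q :: "'x::finite \<Rightarrow> 'x \<Rightarrow> 'q::real_algebra_1"
  shows "laplacian_id \<kappa> d (act q f) m =
    \<kappa> *\<^sub>R (\<Sum>i\<in>UNIV. f i *\<^sub>R (\<Sum>j\<in>UNIV. cmat d m j *\<^sub>R (q i j - q i m)))"
proof -
  have "(\<Sum>j\<in>UNIV. cmat d m j *\<^sub>R (act q f j - act q f m))
      = (\<Sum>j\<in>UNIV. \<Sum>i\<in>UNIV. f i *\<^sub>R (cmat d m j *\<^sub>R (q i j - q i m)))"
    by (simp add: act_def sum_subtractf[symmetric] scaleR_sum_right scaleR_right_diff_distrib) (simp add: mult.commute)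
  also have "\<dots> = (\<Sum>i\<in>UNIV. \<Sum>j\<in>UNIV. f i *\<^sub>R (cmat d m j *\<^sub>R (q i j - q i m)))"
    by (rule sum.swap)
  also have "\<dots> = (\<Sum>i\<in>UNIV. f i *\<^sub>R (\<Sum>j\<in>UNIV. cmat d m j *\<^sub>R (q i j - q i m)))"
    by (simp add: scaleR_sum_right)
  finally show ?thesis by (simp add: lapid_eq)
qed

lemma rhs_eq:
  fixes q :: "'x::finite \<Rightarrow> 'x \<Rightarrow> 'q::real_algebra_1"
  shows "act q (laplacian \<kappa> d f) m =
    \<kappa> *\<^sub>R (\<Sum>i\<in>UNIV. f i *\<^sub>R (\<Sum>j\<in>UNIV. cmat d j i *\<^sub>R q j m - cmat d i j *\<^sub>R q i m))"
proof -
  have "act q (laplacian \<kappa> d f) m = \<kappa> *\<^sub>R (\<Sum>i\<in>UNIV. \<Sum>j\<in>UNIV. (cmat d i j * f j) *\<^sub>R q i m - (cmat d i j * f i) *\<^sub>R q i m)"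
  proof -
    have "\<And>i. (\<kappa> * (\<Sum>j\<in>UNIV. cmat d i j * (f j - f i))) *\<^sub>R q i m
        = \<kappa> *\<^sub>R (\<Sum>j\<in>UNIV. (cmat d i j * f j) *\<^sub>R q i m - (cmat d i j * f i) *\<^sub>R q i m)"
    proof -
      fix i
      have "(\<Sum>j\<in>UNIV. (cmat d i j * f j) *\<^sub>R q i m - (cmat d i j * f i) *\<^sub>R q i m)
          = (\<Sum>j\<in>UNIV. (cmat d i j * (f j - f i)) *\<^sub>R q i m)"
        by (intro sum.cong refl) (simp add: scaleR_left_diff_distrib[symmetric] right_diff_distrib)
      also have "\<dots> = (\<Sum>j\<in>UNIV. cmat d i j * (f j - f i)) *\<^sub>R q i m"
        by (simp add: scaleR_sum_left)
      finally show "(\<kappa> * (\<Sum>j\<in>UNIV. cmat d i j * (f j - f i))) *\<^sub>R q i m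
        = \<kappa> *\<^sub>R (\<Sum>j\<in>UNIV. (cmat d i j * f j) *\<^sub>R q i m - (cmat d i j * f i) *\<^sub>R q i m)"
        by simp
    qed
    thus ?thesis by (simp add: act_def lap_eq scaleR_sum_right)
  qed
  also have "(\<Sum>i\<in>UNIV. \<Sum>j\<in>UNIV. (cmat d i j * f j) *\<^sub>R q i m - (cmat d i j * f i) *\<^sub>R q i m)
     = (\<Sum>i\<in>UNIV. \<Sum>j\<in>UNIV. (cmat d i j * f j) *\<^sub>R q i m) - (\<Sum>i\<in>UNIV. \<Sum>j\<in>UNIV. (cmat d i j * f i) *\<^sub>R q i m)"
    by (simp add: sum_subtractf)
  also have "(\<Sum>i\<in>UNIV. \<Sum>j\<in>UNIV. (cmat d i j * f j) *\<^sub>R q i m) = (\<Sum>j\<in>UNIV. \<Sum>i\<in>UNIV. (cmat d i j * f j) *\<^sub>R q i m)"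
    by (rule sum.swap)
  finally show ?thesis
    by (simp add: sum_subtractf[symmetric] scaleR_sum_right scaleR_right_diff_distrib mult.commute)
qed

lemma sum_delta_scaleR:
  fixes g :: "'x::finite \<Rightarrow> 'q::real_vector"
  shows "(\<Sum>x\<in>UNIV. (if x = i then 1 else 0) *\<^sub>R g x) = g i"
proof -
  have "\<And>x. (if x = i then 1 else 0) *\<^sub>R g x = (if x = i then g x else 0)" by simp
  thus ?thesis by simp
qed

lemma lap_iff:
  fixes q :: "'x::finite \<Rightarrow> 'x \<Rightarrow> 'q::real_algebra_1" and d :: "'x \<Rightarrow> 'x \<Rightarrow> real"
  assumes k: "\<kappa> \<noteq> 0"
  shows "(\<forall>f. laplacian_id \<kappa> d (act q f) = act q (laplacian \<kappa> d f)) \<longleftrightarrow>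
    (\<forall>i m. (\<Sum>j\<in>UNIV. cmat d m j *\<^sub>R (q i j - q i m)) = (\<Sum>j\<in>UNIV. cmat d j i *\<^sub>R q j m - cmat d i j *\<^sub>R q i m))"
proof
  assume H: "\<forall>f. laplacian_id \<kappa> d (act q f) = act q (laplacian \<kappa> d f)"
  show "\<forall>i m. (\<Sum>j\<in>UNIV. cmat d m j *\<^sub>R (q i j - q i m)) = (\<Sum>j\<in>UNIV. cmat d j i *\<^sub>R q j m - cmat d i j *\<^sub>R q i m)"
  proof (intro allI)
    fix i m
    let ?f = "\<lambda>x::'x. if x = i then 1 else (0::real)"
    have "laplacian_id \<kappa> d (act q ?f) m = act q (laplacian \<kappa> d ?f) m" using H by simp
    hence "\<kappa> *\<^sub>R (\<Sum>j\<in>UNIV. cmat d m j *\<^sub>R (q i j - q i m)) = \<kappa> *\<^sub>R (\<Sum>j\<in>UNIV. cmat d j i *\<^sub>R q j m - cmat d i j *\<^sub>R q i m)"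
      unfolding lhs_eq rhs_eq sum_delta_scaleR .
    thus "(\<Sum>j\<in>UNIV. cmat d m j *\<^sub>R (q i j - q i m)) = (\<Sum>j\<in>UNIV. cmat d j i *\<^sub>R q j m - cmat d i j *\<^sub>R q i m)"
      using k by simp
  qed
next
  assume H: "\<forall>i m. (\<Sum>j\<in>UNIV. cmat d m j *\<^sub>R (q i j - q i m)) = (\<Sum>j\<in>UNIV. cmat d j i *\<^sub>R q j m - cmat d i j *\<^sub>R q i m)"
  show "\<forall>f. laplacian_id \<kappa> d (act q f) = act q (laplacian \<kappa> d f)"
    by (intro allI ext) (simp only: lhs_eq rhs_eq H)
qed

lemma rsum_eq:
  fixes M :: "'x::finite \<Rightarrow> 'x \<Rightarrow> real" and q :: "'x \<Rightarrow> 'x \<Rightarrow> 'q::real_algebra_1"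
  assumes mu: "magic_unitary q" and pc: "pcond M q"
  shows "(\<Sum>j\<in>UNIV. M i j *\<^sub>R q i m) = (\<Sum>j\<in>UNIV. M m j *\<^sub>R q i m)"
proof -
  have "(\<Sum>j\<in>UNIV. M i j *\<^sub>R q i m) = (\<Sum>j\<in>UNIV. M i j *\<^sub>R (q i m * (\<Sum>l\<in>UNIV. q j l)))"
    by (simp add: mu_rowsum[OF mu])
  also have "\<dots> = (\<Sum>j\<in>UNIV. \<Sum>l\<in>UNIV. M i j *\<^sub>R (q i m * q j l))"
    by (simp add: sum_distrib_left scaleR_sum_right)
  also have "\<dots> = (\<Sum>j\<in>UNIV. \<Sum>l\<in>UNIV. M m l *\<^sub>R (q i m * q j l))"
    by (intro sum.cong refl) (metis pc pcond_def scaleR_zero_right)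
  also have "\<dots> = (\<Sum>l\<in>UNIV. \<Sum>j\<in>UNIV. M m l *\<^sub>R (q i m * q j l))"
    by (rule sum.swap)
  also have "\<dots> = (\<Sum>l\<in>UNIV. M m l *\<^sub>R (q i m * (\<Sum>j\<in>UNIV. q j l)))"
    by (simp add: sum_distrib_left scaleR_sum_right)
  also have "\<dots> = (\<Sum>j\<in>UNIV. M m j *\<^sub>R q i m)"
    by (simp add: mu_colsum[OF mu])
  finally show ?thesis .
qed

lemma K_iff:
  fixes M :: "'x::finite \<Rightarrow> 'x \<Rightarrow> real" and q :: "'x \<Rightarrow> 'x \<Rightarrow> 'q::real_algebra_1"
  assumes mu: "magic_unitary q" and sym: "\<And>i j. M i j = M j i" and dg: "\<And>i. M i i = 0"
  shows "(\<forall>i m. (\<Sum>j\<in>UNIV. M m j *\<^sub>R (q i j - q i m)) = (\<Sum>j\<in>UNIV. M j i *\<^sub>R q j m - M i j *\<^sub>R q i m))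
     \<longleftrightarrow> pcond M q"
proof -
  have A: "(\<Sum>j\<in>UNIV. M m j *\<^sub>R (q i j - q i m)) = (\<Sum>j\<in>UNIV. M j m *\<^sub>R q i j) - (\<Sum>j\<in>UNIV. M m j *\<^sub>R q i m)" for i m
    by (simp add: sum_subtractf scaleR_right_diff_distrib sym)
  have B: "(\<Sum>j\<in>UNIV. M j i *\<^sub>R q j m - M i j *\<^sub>R q i m) = (\<Sum>j\<in>UNIV. M i j *\<^sub>R q j m) - (\<Sum>j\<in>UNIV. M i j *\<^sub>R q i m)" for i m
    by (simp add: sum_subtractf sym)
  have R: "(\<Sum>j\<in>UNIV. M a j *\<^sub>R q i m) = (\<Sum>j\<in>UNIV. M a j) *\<^sub>R q i m" for a i m
    by (simp add: scaleR_sum_left)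
  have idem: "q i m * q i m = q i m" for i m using mu unfolding magic_unitary_def by auto
  show ?thesis
  proof
    assume H: "\<forall>i m. (\<Sum>j\<in>UNIV. M m j *\<^sub>R (q i j - q i m)) = (\<Sum>j\<in>UNIV. M j i *\<^sub>R q j m - M i j *\<^sub>R q i m)"
    have "\<forall>k l. (\<Sum>i\<in>UNIV. M i l *\<^sub>R q k i) = (\<Sum>i\<in>UNIV. M k i *\<^sub>R q i l)"
    proof (intro allI)
      fix i m
      have e: "(\<Sum>j\<in>UNIV. M j m *\<^sub>R q i j) - (\<Sum>j\<in>UNIV. M m j) *\<^sub>R q i m
          = (\<Sum>j\<in>UNIV. M i j *\<^sub>R q j m) - (\<Sum>j\<in>UNIV. M i j) *\<^sub>R q i m"
        using H A B R by metis
      have s1: "q i m * (\<Sum>j\<in>UNIV. M j m *\<^sub>R q i j) = 0"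
      proof -
        have "q i m * (\<Sum>j\<in>UNIV. M j m *\<^sub>R q i j) = (\<Sum>j\<in>UNIV. M j m *\<^sub>R (q i m * q i j))"
          by (simp add: sum_distrib_left)
        also have "\<dots> = (\<Sum>j\<in>UNIV. M j m *\<^sub>R (if j = m then q i m else 0))"
          by (simp only: mu_row[OF mu])
        also have "\<dots> = 0" by (simp add: dg if_distrib cong: if_cong)
        finally show ?thesis .
      qed
      have s2: "q i m * (\<Sum>j\<in>UNIV. M i j *\<^sub>R q j m) = 0"
      proof -
        have "q i m * (\<Sum>j\<in>UNIV. M i j *\<^sub>R q j m) = (\<Sum>j\<in>UNIV. M i j *\<^sub>R (q i m * q j m))"
          by (simp add: sum_distrib_left)
        also have "\<dots> = (\<Sum>j\<in>UNIV. M i j *\<^sub>R (if j = i then q i m else 0))"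
          by (simp only: mu_col[OF mu])
        also have "\<dots> = 0" by (simp add: dg if_distrib cong: if_cong)
        finally show ?thesis .
      qed
      have "q i m * ((\<Sum>j\<in>UNIV. M j m *\<^sub>R q i j) - (\<Sum>j\<in>UNIV. M m j) *\<^sub>R q i m)
          = q i m * ((\<Sum>j\<in>UNIV. M i j *\<^sub>R q j m) - (\<Sum>j\<in>UNIV. M i j) *\<^sub>R q i m)"
        using e by simp
      hence r: "(\<Sum>j\<in>UNIV. M m j) *\<^sub>R q i m = (\<Sum>j\<in>UNIV. M i j) *\<^sub>R q i m"
        by (simp add: right_diff_distrib s1 s2 idem)
      from e r show "(\<Sum>j\<in>UNIV. M j m *\<^sub>R q i j) = (\<Sum>j\<in>UNIV. M i j *\<^sub>R q j m)"
        by simp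
    qed
    thus "pcond M q" using banica_iff[OF mu] by blast
  next
    assume pc: "pcond M q"
    have ban: "\<forall>k l. (\<Sum>i\<in>UNIV. M i l *\<^sub>R q k i) = (\<Sum>i\<in>UNIV. M k i *\<^sub>R q i l)"
      using banica_iff[OF mu] pc by blast
    show "\<forall>i m. (\<Sum>j\<in>UNIV. M m j *\<^sub>R (q i j - q i m)) = (\<Sum>j\<in>UNIV. M j i *\<^sub>R q j m - M i j *\<^sub>R q i m)"
    proof (intro allI)
      fix i m
      show "(\<Sum>j\<in>UNIV. M m j *\<^sub>R (q i j - q i m)) = (\<Sum>j\<in>UNIV. M j i *\<^sub>R q j m - M i j *\<^sub>R q i m)"
        unfolding A B using ban rsum_eq[OF mu pc, of i m] by simp
    qed
  qed
qed

theorem lemma4p2: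
  fixes d :: "'x::finite \<Rightarrow> 'x \<Rightarrow> real"
    and q :: "'x \<Rightarrow> 'x \<Rightarrow> 'q::real_algebra_1"
    and \<kappa> :: real
  assumes "finite_metric d"
    and "magic_unitary q"
    and "\<kappa> > 0"
  shows "(banica_cond d q \<longleftrightarrow> act2 q (dist_fun d) = tens_one (dist_fun d))
       \<and> (act2 q (dist_fun d) = tens_one (dist_fun d) \<longleftrightarrow> act2 q (cfun d) = tens_one (cfun d))
       \<and> (act2 q (cfun d) = tens_one (cfun d) \<longleftrightarrow>
            (\<forall>f. laplacian_id \<kappa> d (act q f) = act q (laplacian \<kappa> d f)))"
proof -
  note mu = assms(2)
  have sym: "\<And>i j. cmat d i j = cmat d j i" and dg: "\<And>i. cmat d i i = 0"
    using assms(1) unfolding finite_metric_def cmat_def by auto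
  have e1: "banica_cond d q \<longleftrightarrow> pcond d q"
    unfolding banica_cond_def using banica_iff[OF mu, of d] by simp
  have e2: "act2 q (dist_fun d) = tens_one (dist_fun d) \<longleftrightarrow> pcond d q"
    unfolding dist_fun_def using act2_iff[OF mu, of d] by simp
  have e3: "act2 q (cfun d) = tens_one (cfun d) \<longleftrightarrow> pcond d q"
    unfolding cfun_cmat using act2_iff[OF mu, of "cmat d"] pcond_cmat[OF assms(1)] by simp
  have e4: "(\<forall>f. laplacian_id \<kappa> d (act q f) = act q (laplacian \<kappa> d f)) \<longleftrightarrow> pcond d q"
    using lap_iff[of \<kappa> d q] assms(3) K_iff[OF mu sym dg] pcond_cmat[OF assms(1)] by simp
  show ?thesis using e1 e2 e3 e4 by simp
qed

end
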